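(* For $0\le r<n$, the Laplacian $\Lambda_r$ on $M_r$ is positive definite. (Consequently $H_r(M)=0$ for $0\le r<n$.)
   Context: $M_r$ ($0\le r\le n$) is the complex vector space with orthonormal basis the injective words of length $r$ on $\{1,\dots,n\}$, with boundary $\partial_r(a_1\cdots a_r)=\sum_{j=1}^r(-1)^{j-1}a_1\cdots\widehat{a_j}\cdots a_r$. $\delta_r$ is the adjoint of $\partial_{r+1}$ with respect to these orthonormal bases, and $\Lambda_r=\delta_{r-1}\partial_r+\partial_{r+1}\delta_r$. $H_r(M)$ is the $r$-th homology of $(M_*,\partial_* )$. *)

theory Defs
  imports Complex_Main
begin

text \<open>Injective words of length r on the alphabet {1..n}; they form the
orthonormal basis of M_r.\<close>
definition words :: "nat \<Rightarrow> nat \<Rightarrow> nat list set" where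
  "words n r = {w. distinct w \<and> length w = r \<and> set w \<subseteq> {1..n}}"

text \<open>Vectors of M_r: complex coefficient functions on words supported on words n r.\<close>
definition chains :: "nat \<Rightarrow> nat \<Rightarrow> (nat list \<Rightarrow> complex) set" where
  "chains n r = {f. \<forall>w. f w \<noteq> 0 \<longrightarrow> w \<in> words n r}"

definition cip :: "nat \<Rightarrow> nat \<Rightarrow> (nat list \<Rightarrow> complex) \<Rightarrow> (nat list \<Rightarrow> complex) \<Rightarrow> complex" where
  "cip n r f g = (\<Sum>w\<in>words n r. f w * cnj (g w))"

definition del :: "nat \<Rightarrow> nat list \<Rightarrow> nat list" where
  "del j w = take j w @ drop (Suc j) w"

text \<open>Boundary map partial_r : M_r -> M_(r-1), linear extension of
  a_1..a_r |-> sum_j (-1)^(j-1) a_1..hat a_j..a_r (positions 1-based; here 0-based j).\<close>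
definition bd :: "nat \<Rightarrow> nat \<Rightarrow> (nat list \<Rightarrow> complex) \<Rightarrow> (nat list \<Rightarrow> complex)" where
  "bd n r f = (\<lambda>u. \<Sum>w\<in>words n r. \<Sum>j<r. if del j w = u then (-1)^j * f w else 0)"

text \<open>delta_r : M_r -> M_(r+1), the adjoint of partial_(r+1) w.r.t. the orthonormal
  bases (conjugate transpose of its real matrix).\<close>
definition cobd :: "nat \<Rightarrow> nat \<Rightarrow> (nat list \<Rightarrow> complex) \<Rightarrow> (nat list \<Rightarrow> complex)" where
  "cobd n r g = (\<lambda>w. if w \<in> words n (Suc r) then
      (\<Sum>u\<in>words n r. \<Sum>j<Suc r. if del j w = u then (-1)^j * g u else 0) else 0)"

definition lap :: "nat \<Rightarrow> nat \<Rightarrow> (nat list \<Rightarrow> complex) \<Rightarrow> (nat list \<Rightarrow> complex)" where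
  "lap n r f = (\<lambda>w. (if r = 0 then 0 else cobd n (r - 1) (bd n r f) w)
                    + bd n (Suc r) (cobd n r f) w)"

end

theory Submission
  imports Defs
begin

definition ins :: "nat \<Rightarrow> nat \<Rightarrow> nat list \<Rightarrow> nat list" where
  "ins j y u = take j u @ y # drop j u"

lemma ins_Nil[simp]: "ins j z [] = [z]" by (simp add: ins_def)
lemma ins_0[simp]: "ins 0 z u = z # u" by (simp add: ins_def)
lemma ins_Suc_Cons[simp]: "ins (Suc j) z (b # t) = b # ins j z t" by (simp add: ins_def)

lemma length_ins[simp]: "length (ins j z u) = Suc (length u)"
  by (simp add: ins_def)

lemma set_ins[simp]: "set (ins j z u) = insert z (set u)"
proof (induction u arbitrary: j)
  case Nil then show ?case by simp
next
  case (Cons b t) then show ?case by (cases j) auto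
qed

lemma distinct_ins[simp]: "distinct (ins j z u) \<longleftrightarrow> distinct u \<and> z \<notin> set u"
proof (induction u arbitrary: j)
  case Nil then show ?case by simp
next
  case (Cons b t) then show ?case by (cases j) auto
qed

lemma ins_ins: "j \<le> i \<Longrightarrow> i \<le> length v \<Longrightarrow> ins j y (ins i z v) = ins (Suc i) z (ins j y v)"
proof (induction v arbitrary: i j)
  case Nil then show ?case by simp
next
  case (Cons b t)
  show ?case
  proof (cases j)
    case 0 then show ?thesis by simp
  next
    case (Suc j')
    then obtain i' where "i = Suc i'" using Cons by (cases i) auto
    then show ?thesis using Cons Suc by simp
  qed
qed

lemma nth_ins: "j \<le> length u \<Longrightarrow> ins j z u ! j = z"
  by (simp add: ins_def nth_append)

lemma del_ins: "j \<le> length u \<Longrightarrow> del j (ins j z u) = u"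
  by (simp add: ins_def del_def)

lemma ins_del: "j < length w \<Longrightarrow> ins j (w ! j) (del j w) = w"
  by (simp add: ins_def del_def min_def id_take_nth_drop[symmetric])

lemma del_words: "w \<in> words n (Suc r) \<Longrightarrow> j < Suc r \<Longrightarrow> del j w \<in> words n r"
  unfolding words_def del_def
  using set_take_subset[of j w] set_drop_subset[of "Suc j" w]
  by (auto simp: distinct_append set_take_disj_set_drop_if_distinct)

lemma finite_words[simp]: "finite (words n r)"
proof -
  have "words n r \<subseteq> {xs. set xs \<subseteq> {1..n} \<and> length xs = r}" by (auto simp: words_def)
  then show ?thesis using finite_lists_length_eq[of "{1..n}" r] finite_subset by blast
qed


definition Dop :: "nat \<Rightarrow> nat set \<Rightarrow> (nat list \<Rightarrow> complex) \<Rightarrow> nat list \<Rightarrow> complex" where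
  "Dop n F f u = (\<Sum>j\<le>length u. \<Sum>z\<in>{1..n}-F. (-1)^j * f (ins j z u))"

definition hop :: "nat \<Rightarrow> (nat list \<Rightarrow> complex) \<Rightarrow> nat list \<Rightarrow> complex" where
  "hop y f w = (case w of [] \<Rightarrow> 0 | a # t \<Rightarrow> if a = y \<and> y \<notin> set t then f t else 0)"

definition supp :: "nat \<Rightarrow> nat set \<Rightarrow> nat \<Rightarrow> (nat list \<Rightarrow> complex) \<Rightarrow> bool" where
  "supp n F r f \<longleftrightarrow> (\<forall>w. f w \<noteq> 0 \<longrightarrow> distinct w \<and> length w = r \<and> set w \<subseteq> {1..n} \<and> F \<subseteq> set w)"

lemma Dop_add: "Dop n F (\<lambda>w. a w + b w) u = Dop n F a u + Dop n F b u"
  by (simp add: Dop_def distrib_left sum.distrib)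

lemma Dop_diff: "Dop n F (\<lambda>w. a w - b w) u = Dop n F a u - Dop n F b u"
  by (simp add: Dop_def right_diff_distrib sum_subtractf)

lemma Dop_zero: "Dop n F (\<lambda>w. 0) u = 0"
  by (simp add: Dop_def)

lemma H1:
  assumes "y \<in> {1..n}" "y \<notin> F" "y \<notin> set u"
  shows "Dop n F (hop y f) u = f u"
proof -
  have *: "(\<Sum>z\<in>{1..n}-F. (-1)^j * hop y f (ins j z u)) = (if j = 0 then f u else 0)"
    if j: "j \<in> {..length u}" for j
  proof (cases j)
    case 0
    have "(\<Sum>z\<in>{1..n}-F. (-1)^j * hop y f (ins j z u)) = (\<Sum>z\<in>{1..n}-F. if z = y then f u else 0)"
      using 0 assms(3) by (intro sum.cong) (auto simp: hop_def)
    also have "\<dots> = f u" using assms by simp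
    finally show ?thesis using 0 by simp
  next
    case (Suc j')
    then obtain b t where u: "u = b # t" using j by (cases u) auto
    have "b \<noteq> y" using assms(3) u by auto
    then show ?thesis using Suc u by (simp add: hop_def)
  qed
  have "Dop n F (hop y f) u = (\<Sum>j\<le>length u. if j = 0 then f u else 0)"
    unfolding Dop_def by (rule sum.cong) (use * in auto)
  then show ?thesis by simp
qed

lemma H2:
  assumes van: "\<forall>w. y \<in> set w \<longrightarrow> e w = 0" and yu: "y \<in> set u"
  shows "Dop n F (hop y e) u = (if hd u = y then - Dop n F e (tl u) else 0)"
proof -
  obtain b t where u: "u = b # t" using yu by (cases u) auto
  have "Dop n F (hop y e) u = (\<Sum>z\<in>{1..n}-F. hop y e (z # u))
      + (\<Sum>j\<le>length t. \<Sum>z\<in>{1..n}-F. (-1)^(Suc j) * hop y e (b # ins j z t))"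
    unfolding Dop_def u by (simp del: sum.atMost_Suc add: sum.atMost_Suc_shift)
  also have "(\<Sum>z\<in>{1..n}-F. hop y e (z # u)) = 0"
    using yu by (intro sum.neutral) (auto simp: hop_def)
  finally have eq: "Dop n F (hop y e) u =
     (\<Sum>j\<le>length t. \<Sum>z\<in>{1..n}-F. (-1)^(Suc j) * hop y e (b # ins j z t))" by simp
  show ?thesis
  proof (cases "b = y")
    case True
    have "hop y e (b # ins j z t) = e (ins j z t)" for j z
      using True van by (auto simp: hop_def)
    then have "Dop n F (hop y e) u = (\<Sum>j\<le>length t. \<Sum>z\<in>{1..n}-F. - ((-1)^j * e (ins j z t)))"
      using eq by simp
    also have "\<dots> = - Dop n F e t" by (simp add: Dop_def sum_negf)
    finally show ?thesis using u True by simp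
  next
    case False
    then show ?thesis using eq u by (simp add: hop_def)
  qed
qed

lemma DD: "Dop n F (Dop n F f) v = 0"
proof -
  define S where "S = {1..n} - F"
  define m where "m = length v"
  define \<phi> where "\<phi> = (\<lambda>(i::nat,z::nat,j::nat,y::nat). ((-1)^i * ((-1)^j * f (ins j y (ins i z v))))::complex)"
  define T where "T = {..m} \<times> S \<times> {..Suc m} \<times> S"
  define \<iota> where "\<iota> = (\<lambda>(i::nat,z::nat,j::nat,y::nat). if j \<le> i then (j,y,Suc i,z) else (j-1,y,i,z))"
  have "Dop n F (Dop n F f) v = (\<Sum>i\<le>m. \<Sum>z\<in>S. \<Sum>j\<le>Suc m. \<Sum>y\<in>S. \<phi> (i,z,j,y))"
    by (simp del: sum.atMost_Suc add: Dop_def sum_distrib_left S_def m_def \<phi>_def)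
  also have "\<dots> = sum \<phi> T"
    by (simp add: T_def sum.cartesian_product case_prod_beta)
  finally have e1: "Dop n F (Dop n F f) v = sum \<phi> T" .
  have key: "\<iota> (\<iota> a) = a \<and> \<iota> a \<in> T \<and> - \<phi> (\<iota> a) = \<phi> a" if "a \<in> T" for a
  proof -
    obtain i z j y where a: "a = (i,z,j,y)" and i: "i \<le> m" and j: "j \<le> Suc m" and zy: "z \<in> S" "y \<in> S"
      using \<open>a \<in> T\<close> by (auto simp: T_def)
    have 1: "\<iota> (\<iota> a) = a" using a by (auto simp: \<iota>_def)
    have 2: "\<iota> a \<in> T" using a i j zy by (auto simp: \<iota>_def T_def)
    have 3: "- \<phi> (\<iota> a) = \<phi> a"
    proof (cases "j \<le> i")
      case True
      have "ins j y (ins i z v) = ins (Suc i) z (ins j y v)" using True i by (intro ins_ins) (auto simp: m_def)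
      then show ?thesis using True a by (simp add: \<iota>_def \<phi>_def)
    next
      case False
      then obtain j' where j': "j = Suc j'" by (cases j) auto
      have "ins i z (ins j' y v) = ins (Suc j') y (ins i z v)" using False j j' by (intro ins_ins) (auto simp: m_def)
      then show ?thesis using False a j' by (simp add: \<iota>_def \<phi>_def)
    qed
    show ?thesis using 1 2 3 by blast
  qed
  have e2: "sum \<phi> T = sum (\<lambda>t. - \<phi> t) T"
    by (rule sum.reindex_bij_witness[where i=\<iota> and j=\<iota>]) (simp_all add: key)
  have "sum \<phi> T = 0" using e2 by (simp add: sum_negf)
  then show ?thesis using e1 by simp
qed


lemma supp_nd: "supp n F r f \<Longrightarrow> \<not> distinct w \<Longrightarrow> f w = 0"
  by (auto simp: supp_def)

lemma supp_add: "supp n F r a \<Longrightarrow> supp n F r b \<Longrightarrow> supp n F r (\<lambda>w. a w + b w)"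
  unfolding supp_def
proof (intro allI impI)
  fix w assume A: "\<forall>w. a w \<noteq> 0 \<longrightarrow> distinct w \<and> length w = r \<and> set w \<subseteq> {1..n} \<and> F \<subseteq> set w"
    and B: "\<forall>w. b w \<noteq> 0 \<longrightarrow> distinct w \<and> length w = r \<and> set w \<subseteq> {1..n} \<and> F \<subseteq> set w"
    and w: "a w + b w \<noteq> 0"
  from w have "a w \<noteq> 0 \<or> b w \<noteq> 0" by auto
  then show "distinct w \<and> length w = r \<and> set w \<subseteq> {1..n} \<and> F \<subseteq> set w" using A B by blast
qed

lemma supp_diff: "supp n F r a \<Longrightarrow> supp n F r b \<Longrightarrow> supp n F r (\<lambda>w. a w - b w)"
  unfolding supp_def
proof (intro allI impI)
  fix w assume A: "\<forall>w. a w \<noteq> 0 \<longrightarrow> distinct w \<and> length w = r \<and> set w \<subseteq> {1..n} \<and> F \<subseteq> set w"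
    and B: "\<forall>w. b w \<noteq> 0 \<longrightarrow> distinct w \<and> length w = r \<and> set w \<subseteq> {1..n} \<and> F \<subseteq> set w"
    and w: "a w - b w \<noteq> 0"
  from w have "a w \<noteq> 0 \<or> b w \<noteq> 0" by auto
  then show "distinct w \<and> length w = r \<and> set w \<subseteq> {1..n} \<and> F \<subseteq> set w" using A B by blast
qed

lemma supp_mono: "supp n F' r f \<Longrightarrow> F \<subseteq> F' \<Longrightarrow> supp n F r f"
  unfolding supp_def by blast

lemma Dsplit:
  assumes "y \<in> {1..n}" "y \<notin> F"
  shows "Dop n F k u = Dop n (insert y F) k u + (\<Sum>j\<le>length u. (-1)^j * k (ins j y u))"
proof -
  have S: "{1..n} - F = insert y ({1..n} - insert y F)" using assms by auto
  have "(\<Sum>z\<in>{1..n}-F. (-1)^j * k (ins j z u)) =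
        (-1)^j * k (ins j y u) + (\<Sum>z\<in>{1..n}-insert y F. (-1)^j * k (ins j z u))" for j
    by (subst S) (simp add: sum.insert)
  then show ?thesis by (simp add: Dop_def sum.distrib add.commute)
qed

lemma Dop_supp:
  assumes "supp n F (Suc r) f"
  shows "supp n F r (Dop n F f)"
  unfolding supp_def
proof (intro allI impI)
  fix w assume "Dop n F f w \<noteq> 0"
  then obtain j where "(\<Sum>z\<in>{1..n}-F. (-1)^j * f (ins j z w)) \<noteq> 0"
    unfolding Dop_def using sum.not_neutral_contains_not_neutral by blast
  then obtain z where z: "z \<in> {1..n}-F" and "(-1)^j * f (ins j z w) \<noteq> 0"
    using sum.not_neutral_contains_not_neutral by blast
  then have "f (ins j z w) \<noteq> 0" by auto
  from assms[unfolded supp_def, rule_format, OF this]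
  have "distinct (ins j z w) \<and> length (ins j z w) = Suc r \<and> set (ins j z w) \<subseteq> {1..n} \<and> F \<subseteq> set (ins j z w)" .
  then show "distinct w \<and> length w = r \<and> set w \<subseteq> {1..n} \<and> F \<subseteq> set w" using z by auto
qed

lemma hop_supp:
  assumes "y \<in> {1..n}" "supp n F r f"
  shows "supp n F (Suc r) (hop y f)"
  unfolding supp_def
proof (intro allI impI)
  fix w assume w: "hop y f w \<noteq> 0"
  then obtain t where t: "w = y # t" "y \<notin> set t" "f t \<noteq> 0"
    by (auto simp: hop_def split: list.splits if_splits)
  then show "distinct w \<and> length w = Suc r \<and> set w \<subseteq> {1..n} \<and> F \<subseteq> set w"
    using assms by (auto simp: supp_def)
qed

lemma exact_gen:
  assumes rn: "r < n"
  shows "card ({1..n} - F) = m \<Longrightarrow> supp n F r f \<Longrightarrow> (\<forall>u. Dop n F f u = 0)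
         \<Longrightarrow> \<exists>g. supp n F (Suc r) g \<and> (\<forall>u. Dop n F g u = f u)"
proof (induction m arbitrary: F f)
  case 0
  have "{1..n} - F = {}" using "0.prems"(1) by (simp add: card_eq_0_iff)
  then have sub: "{1..n} \<subseteq> F" by blast
  have "f w = 0" for w
  proof (rule ccontr)
    assume "f w \<noteq> 0"
    then have dw: "distinct w" "length w = r" "F \<subseteq> set w" using "0.prems"(2) unfolding supp_def by blast+
    have "card {1..n} \<le> card (set w)" by (rule card_mono) (use dw sub in auto)
    then have "n \<le> r" using distinct_card[OF dw(1)] dw(2) by simp
    then show False using rn by simp
  qed
  then show ?case by (intro exI[of _ "\<lambda>_. 0"]) (auto simp: supp_def Dop_def)
next
  case (Suc m)
  have "{1..n} - F \<noteq> {}" using Suc.prems(1) by (metis card.empty Zero_not_Suc)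
  then obtain y where y: "y \<in> {1..n}" "y \<notin> F" by blast
  define F' where "F' = insert y F"
  have "{1..n} - F' = ({1..n} - F) - {y}" by (auto simp: F'_def)
  then have cF': "card ({1..n} - F') = m" using Suc.prems(1) y by (simp add: card_Diff_singleton)
  define hf where "hf = hop y f"
  define g where "g = (\<lambda>u. f u - Dop n F hf u)"
  have hf_supp: "supp n F (Suc r) hf" unfolding hf_def by (rule hop_supp[OF y(1) Suc.prems(2)])
  have g_supp: "supp n F r g" unfolding g_def by (rule supp_diff[OF Suc.prems(2) Dop_supp[OF hf_supp]])
  have g_y: "g u = 0" if "y \<notin> set u" for u
    using H1[OF y that] by (simp add: g_def hf_def)
  have g_supp': "supp n F' r g" unfolding supp_def
  proof (intro allI impI)
    fix w assume gw: "g w \<noteq> 0"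
    then have "y \<in> set w" using g_y by blast
    moreover have "distinct w \<and> length w = r \<and> set w \<subseteq> {1..n} \<and> F \<subseteq> set w"
      using g_supp gw unfolding supp_def by blast
    ultimately show "distinct w \<and> length w = r \<and> set w \<subseteq> {1..n} \<and> F' \<subseteq> set w"
      unfolding F'_def by blast
  qed
  have Dg: "Dop n F g u = 0" for u
    using Suc.prems(3) by (simp add: g_def Dop_diff DD)
  have Dg': "Dop n F' g u = 0" for u
  proof (cases "y \<in> set u")
    case True
    have "(\<Sum>j\<le>length u. (-1)^j * g (ins j y u)) = 0"
      by (intro sum.neutral) (simp add: supp_nd[OF g_supp] True)
    then show ?thesis using Dsplit[OF y, of g u] Dg by (simp add: F'_def)
  next
    case False
    have "g (ins j z u) = 0" if "z \<in> {1..n} - F'" for j z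
      using that False by (intro g_y) (auto simp: F'_def)
    then show ?thesis by (simp add: Dop_def)
  qed
  obtain k where k: "supp n F' (Suc r) k" "\<forall>u. Dop n F' k u = g u"
    using Suc.IH[OF cF' g_supp'] Dg' by blast
  have kF: "supp n F (Suc r) k" using k(1) by (rule supp_mono) (auto simp: F'_def)
  define e where "e = (\<lambda>u. Dop n F k u - g u)"
  have e_van: "\<forall>w. y \<in> set w \<longrightarrow> e w = 0"
  proof (intro allI impI)
    fix w assume yw: "y \<in> set w"
    have "(\<Sum>j\<le>length w. (-1)^j * k (ins j y w)) = 0"
      by (intro sum.neutral) (simp add: supp_nd[OF kF] yw)
    then show "e w = 0" using Dsplit[OF y, of k w] k(2) by (simp add: e_def F'_def)
  qed
  have De: "Dop n F e u = 0" for u by (simp add: e_def Dop_diff DD Dg)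
  have e_supp: "supp n F r e" unfolding e_def by (rule supp_diff[OF Dop_supp[OF kF] g_supp])
  have Dhe: "Dop n F (hop y e) u = e u" for u
  proof (cases "y \<in> set u")
    case True
    have "Dop n F (hop y e) u = (if hd u = y then - Dop n F e (tl u) else 0)"
      by (rule H2[OF e_van True])
    also have "\<dots> = 0" using De by simp
    also have "0 = e u" using e_van True by simp
    finally show ?thesis .
  next
    case False
    then show ?thesis using H1[OF y False] by simp
  qed
  define G where "G = (\<lambda>w. hf w + k w - hop y e w)"
  have "supp n F (Suc r) G" unfolding G_def
    by (intro supp_diff supp_add hf_supp kF hop_supp[OF y(1) e_supp])
  moreover have "Dop n F G u = f u" for u
  proof -
    have "Dop n F G u = Dop n F hf u + Dop n F k u - Dop n F (hop y e) u"
      unfolding G_def by (simp only: Dop_diff Dop_add)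
    also have "\<dots> = f u" using Dhe[of u] unfolding g_def e_def by simp
    finally show ?thesis .
  qed
  ultimately show ?case by blast
qed


lemma bd_Dop:
  assumes f: "f \<in> chains n r"
  shows "bd n r f u = Dop n {} f u"
proof -
  have ch: "f w = 0" if "w \<notin> words n r" for w
    using f that unfolding chains_def by blast
  have swap: "bd n r f u = (\<Sum>j<r. \<Sum>w\<in>words n r. if del j w = u then (-1)^j * f w else 0)"
    unfolding bd_def by (rule sum.swap)
  show ?thesis
  proof (cases "r = Suc (length u)")
    case True
    have inner: "(\<Sum>w\<in>words n r. if del j w = u then (-1)^j * f w else 0)
        = (\<Sum>z\<in>{1..n}. (-1)^j * f (ins j z u))" if j: "j \<le> length u" for j
    proof -
      define Z where "Z = {z \<in> {1..n}. ins j z u \<in> words n r}"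
      have "(\<Sum>z\<in>{1..n}. (-1)^j * f (ins j z u)) = (\<Sum>z\<in>Z. (-1)^j * f (ins j z u))"
      proof (rule sum.mono_neutral_right)
        show "\<forall>z\<in>{1..n} - Z. (-1)^j * f (ins j z u) = 0"
          using ch by (auto simp: Z_def)
      qed (auto simp: Z_def)
      also have "\<dots> = (\<Sum>w\<in>(\<lambda>z. ins j z u) ` Z. (-1)^j * f w)"
      proof (rule sum.reindex[symmetric, unfolded comp_def])
        show "inj_on (\<lambda>z. ins j z u) Z"
          by (rule inj_onI) (metis nth_ins j)
      qed
      also have "(\<lambda>z. ins j z u) ` Z = {w \<in> words n r. del j w = u}"
      proof
        show "(\<lambda>z. ins j z u) ` Z \<subseteq> {w \<in> words n r. del j w = u}"
          using j by (auto simp: Z_def del_ins)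
        show "{w \<in> words n r. del j w = u} \<subseteq> (\<lambda>z. ins j z u) ` Z"
        proof
          fix w assume w: "w \<in> {w \<in> words n r. del j w = u}"
          then have lw: "length w = r" by (simp add: words_def)
          then have jw: "j < length w" using True j by simp
          have eq: "ins j (w ! j) u = w" using ins_del[OF jw] w by simp
          have "w ! j \<in> set w" by (rule nth_mem[OF jw])
          then have "w ! j \<in> {1..n}" using w by (auto simp: words_def)
          then have "w ! j \<in> Z" using eq w by (simp add: Z_def)
          then show "w \<in> (\<lambda>z. ins j z u) ` Z" using eq by force
        qed
      qed
      also have "(\<Sum>w\<in>{w \<in> words n r. del j w = u}. (-1)^j * f w)
          = (\<Sum>w\<in>words n r. if del j w = u then (-1)^j * f w else 0)"
        by (simp add: sum.inter_filter)
      finally show ?thesis by simp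
    qed
    have "bd n r f u = (\<Sum>j\<le>length u. \<Sum>z\<in>{1..n}. (-1)^j * f (ins j z u))"
    proof -
      have "{..<r} = {..length u}" using True by auto
      then show ?thesis unfolding swap by (intro sum.cong) (simp_all add: inner)
    qed
    then show ?thesis by (simp add: Dop_def)
  next
    case False
    have "bd n r f u = 0" unfolding swap
    proof (intro sum.neutral ballI)
      fix j w assume j: "j \<in> {..<r}" and w: "w \<in> words n r"
      have "del j w \<noteq> u"
      proof
        assume "del j w = u"
        then have "length u = r - 1" using w j by (auto simp: del_def words_def)
        then show False using False j by auto
      qed
      then show "(if del j w = u then (-1)^j * f w else 0) = 0" by simp
    qed
    moreover have "Dop n {} f u = 0" unfolding Dop_def
      using False by (intro sum.neutral ballI) (simp add: ch words_def)
    ultimately show ?thesis by simp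
  qed
qed

lemma cobd_eq: "cobd n r g w = (if w \<in> words n (Suc r) then (\<Sum>j<Suc r. (-1)^j * g (del j w)) else 0)"
proof (cases "w \<in> words n (Suc r)")
  case True
  have "(\<Sum>u\<in>words n r. \<Sum>j<Suc r. if del j w = u then (-1)^j * g u else 0)
      = (\<Sum>j<Suc r. \<Sum>u\<in>words n r. if del j w = u then (-1)^j * g u else 0)"
    by (rule sum.swap)
  also have "\<dots> = (\<Sum>j<Suc r. (-1)^j * g (del j w))"
    by (rule sum.cong) (simp_all add: sum.delta' del_words[OF True])
  finally show ?thesis using True by (simp add: cobd_def)
next
  case False then show ?thesis by (simp add: cobd_def)
qed

lemma ADJ: "cip n r (bd n (Suc r) b) a = cip n (Suc r) b (cobd n r a)"
proof -
  have "cip n r (bd n (Suc r) b) a =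
      (\<Sum>u\<in>words n r. \<Sum>w\<in>words n (Suc r). \<Sum>j<Suc r. if del j w = u then (-1)^j * b w * cnj (a u) else 0)"
    unfolding cip_def bd_def sum_distrib_right by (intro sum.cong refl) simp
  also have "\<dots> = (\<Sum>w\<in>words n (Suc r). \<Sum>j<Suc r. \<Sum>u\<in>words n r. if del j w = u then (-1)^j * b w * cnj (a u) else 0)"
    by (subst sum.swap) (simp add: sum.swap[of _ "words n r"])
  also have "\<dots> = (\<Sum>w\<in>words n (Suc r). \<Sum>j<Suc r. (-1)^j * b w * cnj (a (del j w)))"
    by (intro sum.cong refl) (simp add: sum.delta' del_words)
  also have "\<dots> = cip n (Suc r) b (cobd n r a)"
    unfolding cip_def cobd_eq by (intro sum.cong refl) (simp del: sum.lessThan_Suc add: sum_distrib_left mult_ac)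
  finally show ?thesis .
qed


lemma supp_chains: "supp n {} r f \<longleftrightarrow> f \<in> chains n r"
  by (simp add: supp_def chains_def words_def)

lemma exact:
  assumes rn: "r < n" and f: "f \<in> chains n r" and bf: "bd n r f = (\<lambda>_. 0)"
  shows "\<exists>g\<in>chains n (Suc r). bd n (Suc r) g = f"
proof -
  have s: "supp n {} r f" using f by (simp add: supp_chains)
  have d: "\<forall>u. Dop n {} f u = 0" using bf bd_Dop[OF f] by metis
  obtain g where g: "supp n {} (Suc r) g" "\<forall>u. Dop n {} g u = f u"
    using exact_gen[OF rn refl s d] by blast
  have gc: "g \<in> chains n (Suc r)" using g(1) by (simp add: supp_chains)
  have "bd n (Suc r) g = f" using g(2) bd_Dop[OF gc] by auto
  then show ?thesis using gc by blast
qed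

lemma cip_add1: "cip n r (\<lambda>w. A w + B w) f = cip n r A f + cip n r B f"
  by (simp add: cip_def distrib_right sum.distrib)

lemma cip_conj: "cip n r a b = cnj (cip n r b a)"
  by (simp add: cip_def mult.commute)

lemma cip_self: "cip n r a a = of_real (\<Sum>w\<in>words n r. (cmod (a w))^2)"
  unfolding cip_def of_real_sum by (intro sum.cong refl) (rule complex_norm_square[symmetric])

lemma sumsq_zero: "(\<Sum>w\<in>words n r. (cmod (a w))^2) = 0 \<Longrightarrow> w \<in> words n r \<Longrightarrow> a w = 0"
  using sum_nonneg_eq_0_iff[of "words n r" "\<lambda>w. (cmod (a w))^2"] by simp

lemma bd_supp: "bd n (Suc r) f u \<noteq> 0 \<Longrightarrow> u \<in> words n r"
proof -
  assume "bd n (Suc r) f u \<noteq> 0"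
  then obtain w where w: "w \<in> words n (Suc r)" and
    "(\<Sum>j<Suc r. if del j w = u then (-1)^j * f w else 0) \<noteq> 0"
    unfolding bd_def using sum.not_neutral_contains_not_neutral by blast
  then obtain j where j: "j < Suc r" and "(if del j w = u then (-1)^j * f w else (0::complex)) \<noteq> 0"
    using sum.not_neutral_contains_not_neutral by blast
  then have "del j w = u" by (cases "del j w = u") auto
  then show ?thesis using del_words[OF w j] by simp
qed

theorem theorem3p3:
  fixes n r :: nat
  assumes "r < n"
  shows "(\<forall>f\<in>chains n r. f \<noteq> (\<lambda>_. 0) \<longrightarrow>
            cip n r (lap n r f) f \<in> \<real> \<and> 0 < Re (cip n r (lap n r f) f))
         \<and> (\<forall>f\<in>chains n r. bd n r f = (\<lambda>_. 0) \<longrightarrow>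
            (\<exists>g\<in>chains n (Suc r). bd n (Suc r) g = f))"
proof -
  have P2: "\<forall>f\<in>chains n r. bd n r f = (\<lambda>_. 0) \<longrightarrow> (\<exists>g\<in>chains n (Suc r). bd n (Suc r) g = f)"
    using exact[OF assms] by blast
  have P1: "cip n r (lap n r f) f \<in> \<real> \<and> 0 < Re (cip n r (lap n r f) f)"
    if f: "f \<in> chains n r" and nz: "f \<noteq> (\<lambda>_. 0)" for f
  proof -
  define c where "c = bd n r f"
  define d where "d = cobd n r f"
  define P where "P = (if r = 0 then 0 else (\<Sum>w\<in>words n (r - 1). (cmod (c w))^2))"
  define Q where "Q = (\<Sum>w\<in>words n (Suc r). (cmod (d w))^2)"
  have P0: "P \<ge> 0" unfolding P_def by (simp add: sum_nonneg)
  have Q0: "Q \<ge> 0" unfolding Q_def by (simp add: sum_nonneg)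
  have first: "cip n r (\<lambda>w. if r = 0 then 0 else cobd n (r - 1) (bd n r f) w) f = of_real P"
  proof (cases r)
    case 0 then show ?thesis by (simp add: cip_def P_def)
  next
    case (Suc r')
    have "cip n r (\<lambda>w. if r = 0 then 0 else cobd n (r - 1) (bd n r f) w) f
        = cip n (Suc r') (cobd n r' c) f" using Suc by (simp add: c_def)
    also have "\<dots> = cnj (cip n (Suc r') f (cobd n r' c))" by (rule cip_conj)
    also have "\<dots> = cnj (cip n r' (bd n (Suc r') f) c)" by (simp add: ADJ)
    also have "\<dots> = cnj (cip n r' c c)" using Suc by (simp add: c_def)
    also have "\<dots> = of_real P" using Suc by (simp add: cip_self P_def)
    finally show ?thesis .
  qed
  have second: "cip n r (bd n (Suc r) (cobd n r f)) f = of_real Q"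
    by (simp add: ADJ cip_self Q_def d_def)
  have eq: "cip n r (lap n r f) f = of_real (P + Q)"
    unfolding lap_def cip_add1 first second by simp
  show "cip n r (lap n r f) f \<in> \<real> \<and> 0 < Re (cip n r (lap n r f) f)"
  proof
    show "cip n r (lap n r f) f \<in> \<real>" using eq by simp
    show "0 < Re (cip n r (lap n r f) f)"
    proof (rule ccontr)
      assume "\<not> 0 < Re (cip n r (lap n r f) f)"
      then have "P + Q \<le> 0" using eq by simp
      then have PZ: "P = 0" and QZ: "Q = 0" using P0 Q0 by auto
      have dz: "d w = 0" if "w \<in> words n (Suc r)" for w
        using sumsq_zero[OF QZ[unfolded Q_def] that] .
      have bz: "bd n r f = (\<lambda>_. 0)"
      proof (cases r)
        case 0 then show ?thesis by (simp add: bd_def)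
      next
        case (Suc r')
        show ?thesis
        proof
          fix u
          show "bd n r f u = 0"
          proof (rule ccontr)
            assume nzu: "bd n r f u \<noteq> 0"
            then have uw: "u \<in> words n r'" using bd_supp Suc by blast
            have "(\<Sum>w\<in>words n r'. (cmod (c w))^2) = 0" using PZ Suc by (simp add: P_def)
            then have "c u = 0" using sumsq_zero uw by blast
            then show False using nzu by (simp add: c_def)
          qed
        qed
      qed
      obtain g where g: "g \<in> chains n (Suc r)" "bd n (Suc r) g = f"
        using exact[OF assms f bz] by blast
      have "cip n r f f = cip n (Suc r) g d" using g(2) ADJ[of n r g f] by (simp add: d_def)
      also have "\<dots> = 0" unfolding cip_def by (intro sum.neutral) (simp add: dz)
      finally have "cip n r f f = 0" .
      then have ss: "(\<Sum>w\<in>words n r. (cmod (f w))^2) = 0" by (metis cip_self of_real_eq_0_iff)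
      have "f w = 0" for w
      proof (cases "w \<in> words n r")
        case True then show ?thesis using sumsq_zero[OF ss] by simp
      next
        case False then show ?thesis using f by (auto simp: chains_def)
      qed
      then show False using nz by auto
    qed
  qed
  qed
  show ?thesis using P1 P2 by blast
qed

end
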